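(* Fix constants $\alpha>0$, $\beta>0$, $\gamma_P>2$ and $0<\epsilon<\epsilon_s$, and suppose $$\eta:=\max\{1+(\epsilon-\epsilon_s)/2,\ \epsilon_s\}<1.$$ Let $f_\eta(n):=n^\eta$, $s:=\min\{\lceil\alpha n^{\epsilon_s}\rceil,n-1\}$ and $g:=(\beta s n^{\epsilon})^{1/2}$, and suppose $s<n-1$. Let $c_{nk}$ be the number of comparisons made by the nonrecursive SELECT on an input list of size $n$ with rank $k$, and set $$\hat\gamma_P:=(4\gamma_P+2)(\beta/\alpha)^{1/2}+(2\gamma_P-1)\big[\alpha+1/f_\eta(n)\big].$$ Then $$\mathrm{P}\big[c_{nk}\le n+\min\{k,n-k\}+\hat\gamma_P f_\eta(n)\big]\ge1-4e^{-2\beta n^{\epsilon}}.$$ Moreover, if $n^{1-\eta}e^{-2\beta n^{\epsilon}}\le1$, then $$\mathrm{E}\,c_{nk}\le n+\min\{k,n-k\}+(\hat\gamma_P+4\gamma_P+2)f_\eta(n).$$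
   Context: Nonrecursive SELECT. The input is a list $X=(x_1,\dots,x_n)$ of elements of a totally ordered set (repeated values allowed) and an integer $1\le k\le n$. Let $\mathcal R$ be a deterministic routine that finds the $i$th smallest of any $m$ elements using at most $\gamma_P m$ comparisons. 1. Choose a set $I$ of $s$ positions uniformly at random among all $s$-subsets of $\{1,\dots,n\}$. The sample is $S=(x_j)_{j\in I}$ with sorted elements $y_1^*\le\dots\le y_s^*$. 2. Set $i_u:=\max\{\lceil ks/n-g\rceil,1\}$ and $i_v:=\min\{\lceil ks/n+g\rceil,s\}$. Compute $u:=y_{i_u}^*$ and $v:=y_{i_v}^*$ using $\mathcal R$ at most twice on at most $s$ elements, so this step uses at most $2\gamma_P s$ comparisons. 3. Partition. Each $x_j$ with $j\notin I$ is compared with the pivots. - If $k<n/2$: $x_j$ is compared with $v$ first, and with $u$ only if $x_j<v$ and $u<v$. - If $k\ge n/2$: $x_j$ is compared with $u$ first, and with $v$ only if $x_j>u$ and $u<v$. Sample elements are not compared. Hence this step uses $c$ comparisons, where $c=n-s$ if $u=v$, $c=(n-s)+|\{j\notin I:x_j<v\}|$ if $u<v$ and $k<n/2$, and $c=(n-s)+|\{j\notin I:x_j>u\}|$ if $u<v$ and $k\ge n/2$. 4. Let $L=\{x<u\}$, $U=\{x=u\}$, $M=\{u<x<v\}$ and $R=\{x>v\}$. - If $|L|<k\le|L\cup U|$, return $u$; if $|L\cup U\cup M|<k\le n-|R|$, return $v$. In either case set $\hat n:=0$. - Otherwise let $\hat X$ be $L$ if $k\le|L|$, else $R$ if $n-|R|<k$,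 else $M$. Let $\hat n:=|\hat X|$ and find the answer in $\hat X$ with $\mathcal R$, using at most $\gamma_P\hat n$ comparisons. The total count $c_{nk}$ consists of the comparisons in steps 2, 3 and 4, so $c_{nk}\le 2\gamma_P s+c+\gamma_P\hat n$. $\mathrm{P}$ and $\mathrm{E}$ are with respect to the random sample. *)

theory Defs
  imports "HOL-Probability.Probability"
begin

text \<open>Sample space: all s-subsets of positions; the sample is drawn uniformly from it.\<close>
definition samples :: "nat \<Rightarrow> nat \<Rightarrow> nat set set" where
  "samples n s = {I. I \<subseteq> {..<n} \<and> card I = s}"

definition sample_size :: "real \<Rightarrow> real \<Rightarrow> nat \<Rightarrow> nat" where
  "sample_size \<alpha> \<epsilon>s n = min (nat \<lceil>\<alpha> * real n powr \<epsilon>s\<rceil>) (n - 1)"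

definition gap :: "real \<Rightarrow> real \<Rightarrow> nat \<Rightarrow> nat \<Rightarrow> real" where
  "gap \<beta> \<epsilon> s n = sqrt (\<beta> * real s * real n powr \<epsilon>)"

text \<open>Sorted sample y_1^*, ..., y_s^* (1-based ranks, stored 0-based in the list).\<close>
definition sorted_sample :: "'a::linorder list \<Rightarrow> nat set \<Rightarrow> 'a list" where
  "sorted_sample xs I = sort (map (\<lambda>j. xs ! j) (sorted_list_of_set I))"

definition idx_u :: "nat \<Rightarrow> nat \<Rightarrow> nat \<Rightarrow> real \<Rightarrow> nat" where
  "idx_u n k s g = nat (max \<lceil>real k * real s / real n - g\<rceil> 1)"

definition idx_v :: "nat \<Rightarrow> nat \<Rightarrow> nat \<Rightarrow> real \<Rightarrow> nat" where
  "idx_v n k s g = nat (min \<lceil>real k * real s / real n + g\<rceil> (int s))"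

definition pivot_u :: "'a::linorder list \<Rightarrow> nat \<Rightarrow> nat \<Rightarrow> real \<Rightarrow> nat set \<Rightarrow> 'a" where
  "pivot_u xs k s g I = sorted_sample xs I ! (idx_u (length xs) k s g - 1)"

definition pivot_v :: "'a::linorder list \<Rightarrow> nat \<Rightarrow> nat \<Rightarrow> real \<Rightarrow> nat set \<Rightarrow> 'a" where
  "pivot_v xs k s g I = sorted_sample xs I ! (idx_v (length xs) k s g - 1)"

definition part_cost :: "'a::linorder list \<Rightarrow> nat \<Rightarrow> nat set \<Rightarrow> 'a \<Rightarrow> 'a \<Rightarrow> nat" where
  "part_cost xs k I u v =
     (let n = length xs in
      (n - card I) +
      (if u = v then 0
       else if 2 * k < n then card {j. j < n \<and> j \<notin> I \<and> xs ! j < v}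
       else card {j. j < n \<and> j \<notin> I \<and> xs ! j > u}))"

text \<open>Size \<hat>n of the set handed to the routine in step 4.\<close>
definition hat_n :: "'a::linorder list \<Rightarrow> nat \<Rightarrow> 'a \<Rightarrow> 'a \<Rightarrow> nat" where
  "hat_n xs k u v =
     (let n = length xs;
          L = card {j. j < n \<and> xs ! j < u};
          U = card {j. j < n \<and> xs ! j = u};
          M = card {j. j < n \<and> u < xs ! j \<and> xs ! j < v};
          R = card {j. j < n \<and> xs ! j > v}
      in if (L < k \<and> k \<le> L + U) \<or> (L + U + M < k \<and> k \<le> n - R) then 0
         else if k \<le> L then L
         else if n - R < k then R
         else M)"

text \<open>Upper bound 2 \<gamma>_P s + c + \<gamma>_P \<hat>n on the comparison count for sample I.\<close>
definition cost_bound :: "real \<Rightarrow> 'a::linorder list \<Rightarrow> nat \<Rightarrow> nat \<Rightarrow> real \<Rightarrow> nat set \<Rightarrow> real" where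
  "cost_bound \<gamma>P xs k s g I =
     (let u = pivot_u xs k s g I; v = pivot_v xs k s g I in
      2 * \<gamma>P * real s + real (part_cost xs k I u v) + \<gamma>P * real (hat_n xs k u v))"

end

theory Submission
  imports Defs
begin


lemma card_supsets:
  assumes J: "J \<subseteq> {..<n}" "card J = j" "j \<le> s"
  shows "card {I. I \<subseteq> {..<n} \<and> card I = s \<and> J \<subseteq> I} = (n - j) choose (s - j)"
proof -
  have fJ: "finite J" using J(1) finite_subset by blast
  have "bij_betw (\<lambda>I. I - J) {I. I \<subseteq> {..<n} \<and> card I = s \<and> J \<subseteq> I}
          {K. K \<subseteq> {..<n} - J \<and> card K = s - j}"
  proof (rule bij_betw_byWitness[where f' = "\<lambda>K. K \<union> J"])
    show "\<forall>a\<in>{I. I \<subseteq> {..<n} \<and> card I = s \<and> J \<subseteq> I}. a - J \<union> J = a" by auto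
    show "\<forall>a'\<in>{K. K \<subseteq> {..<n} - J \<and> card K = s - j}. a' \<union> J - J = a'" by auto
    show "(\<lambda>I. I - J) ` {I. I \<subseteq> {..<n} \<and> card I = s \<and> J \<subseteq> I} \<subseteq> {K. K \<subseteq> {..<n} - J \<and> card K = s - j}"
    proof
      fix K assume "K \<in> (\<lambda>I. I - J) ` {I. I \<subseteq> {..<n} \<and> card I = s \<and> J \<subseteq> I}"
      then obtain I where I: "I \<subseteq> {..<n}" "card I = s" "J \<subseteq> I" "K = I - J" by auto
      have "finite I" using I(1) finite_subset by blast
      then have "card (I - J) = s - j" using I J by (simp add: card_Diff_subset fJ)
      then show "K \<in> {K. K \<subseteq> {..<n} - J \<and> card K = s - j}" using I by auto
    qed
    show "(\<lambda>K. K \<union> J) ` {K. K \<subseteq> {..<n} - J \<and> card K = s - j} \<subseteq> {I. I \<subseteq> {..<n} \<and> card I = s \<and> J \<subseteq> I}"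
    proof
      fix I assume "I \<in> (\<lambda>K. K \<union> J) ` {K. K \<subseteq> {..<n} - J \<and> card K = s - j}"
      then obtain K where K: "K \<subseteq> {..<n} - J" "card K = s - j" "I = K \<union> J" by auto
      have "finite K" using K(1) finite_subset by blast
      have "card (K \<union> J) = s - j + j" using K J fJ \<open>finite K\<close>
        by (subst card_Un_disjoint) auto
      then show "I \<in> {I. I \<subseteq> {..<n} \<and> card I = s \<and> J \<subseteq> I}" using K J by auto
    qed
  qed
  then have "card {I. I \<subseteq> {..<n} \<and> card I = s \<and> J \<subseteq> I} = card {K. K \<subseteq> {..<n} - J \<and> card K = s - j}"
    by (rule bij_betw_same_card)
  also have "\<dots> = card ({..<n} - J) choose (s - j)" by (rule n_subsets) auto
  also have "card ({..<n} - J) = n - j" using J fJ by (simp add: card_Diff_subset)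
  finally show ?thesis .
qed

lemma sum_choose_inter:
  assumes A: "A \<subseteq> {..<n}" "card A = m" and js: "j \<le> s"
  shows "(\<Sum>I\<in>samples n s. card (I \<inter> A) choose j) = (m choose j) * ((n - j) choose (s - j))"
proof -
  have fA: "finite A" using A finite_subset by blast
  have finS: "finite (samples n s)" unfolding samples_def
    by (rule finite_subset[of _ "Pow {..<n}"]) auto
  define JJ where "JJ = {J. J \<subseteq> A \<and> card J = j}"
  have finJJ: "finite JJ" unfolding JJ_def by (rule finite_subset[of _ "Pow A"]) (use fA in auto)
  have "(\<Sum>I\<in>samples n s. card (I \<inter> A) choose j) = (\<Sum>I\<in>samples n s. \<Sum>J\<in>JJ. if J \<subseteq> I then 1 else 0)"
  proof (rule sum.cong[OF refl])
    fix I assume "I \<in> samples n s"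
    have "card (I \<inter> A) choose j = card {J. J \<subseteq> I \<inter> A \<and> card J = j}"
      by (rule n_subsets[symmetric]) (use fA in auto)
    also have "{J. J \<subseteq> I \<inter> A \<and> card J = j} = {J\<in>JJ. J \<subseteq> I}" unfolding JJ_def by auto
    also have "card \<dots> = (\<Sum>J\<in>JJ. if J \<subseteq> I then 1 else 0)"
      using finJJ by (simp add: sum.If_cases Int_def)
    finally show "card (I \<inter> A) choose j = (\<Sum>J\<in>JJ. if J \<subseteq> I then 1 else 0)" .
  qed
  also have "\<dots> = (\<Sum>J\<in>JJ. \<Sum>I\<in>samples n s. if J \<subseteq> I then 1 else 0)" by (rule sum.swap)
  also have "\<dots> = (\<Sum>J\<in>JJ. (n - j) choose (s - j))"
  proof (rule sum.cong[OF refl])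
    fix J assume J: "J \<in> JJ"
    have "(\<Sum>I\<in>samples n s. if J \<subseteq> I then 1 else 0) = card {I \<in> samples n s. J \<subseteq> I}"
      using finS by (simp add: sum.If_cases Int_def)
    also have "{I \<in> samples n s. J \<subseteq> I} = {I. I \<subseteq> {..<n} \<and> card I = s \<and> J \<subseteq> I}"
      unfolding samples_def by auto
    also have "card \<dots> = (n - j) choose (s - j)"
      using J A js unfolding JJ_def by (intro card_supsets) auto
    finally show "(\<Sum>I\<in>samples n s. if J \<subseteq> I then 1 else 0) = (n - j) choose (s - j)" .
  qed
  also have "\<dots> = (m choose j) * ((n - j) choose (s - j))"
    using n_subsets[OF fA, of j] A unfolding JJ_def by simp
  finally show ?thesis .
qed

lemma choose_Suc_mult: "(m choose Suc j) * Suc j = (m choose j) * (m - j)"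
proof (cases m)
  case 0 then show ?thesis by simp
next
  case (Suc m')
  have a: "Suc m' * (m' choose j) = (Suc m' choose Suc j) * Suc j" by (rule Suc_times_binomial_eq)
  have b: "(Suc m' - j) * (Suc m' choose j) = Suc m' * ((Suc m' - 1) choose j)" by (rule binomial_absorb_comp)
  show ?thesis using a b Suc by (simp add: mult.commute)
qed

lemma choose_ratio_le:
  assumes "m \<le> n" "0 < n"
  shows "real (m choose j) \<le> real (n choose j) * (real m / real n) ^ j"
proof (induction j)
  case 0 then show ?case by simp
next
  case (Suc j)
  show ?case
  proof (cases "j < m")
    case False
    then have "m < Suc j" by simp
    then have z: "m choose Suc j = 0" by (rule binomial_eq_0)
    show ?thesis unfolding z by simp
  next
    case True
    have e1: "real (m choose Suc j) * real (Suc j) = real (m choose j) * real (m - j)"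
      by (metis choose_Suc_mult of_nat_mult)
    have e2: "real (n choose Suc j) * real (Suc j) = real (n choose j) * real (n - j)"
      by (metis choose_Suc_mult of_nat_mult)
    have jn: "j < n" using True assms by simp
    have key: "real (m - j) \<le> real (n - j) * (real m / real n)"
    proof -
      have jj: "real j * real m \<le> real j * real n" using assms by (intro mult_left_mono) auto
      have "real (m - j) * real n \<le> real (n - j) * real m"
        using True jn assms jj by (simp add: of_nat_diff algebra_simps)
      then show ?thesis using assms by (simp add: field_simps)
    qed
    have "real (m choose Suc j) * real (Suc j) = real (m choose j) * real (m - j)" by (rule e1)
    also have "\<dots> \<le> (real (n choose j) * (real m / real n) ^ j) * (real (n - j) * (real m / real n))"
      by (intro mult_mono Suc.IH key) auto
    also have "\<dots> = (real (n choose j) * real (n - j)) * (real m / real n) ^ Suc j"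
      by (simp only: power_Suc mult_ac)
    also have "\<dots> = (real (n choose Suc j) * real (Suc j)) * (real m / real n) ^ Suc j"
      by (simp only: e2)
    also have "\<dots> = (real (n choose Suc j) * (real m / real n) ^ Suc j) * real (Suc j)"
      by (simp only: mult_ac)
    finally have "real (m choose Suc j) * real (Suc j) \<le> (real (n choose Suc j) * (real m / real n) ^ Suc j) * real (Suc j)" .
    then show ?thesis by (rule mult_right_le_imp_le) simp
  qed
qed

lemma samples_finite: "finite (samples n s)"
  unfolding samples_def by (rule finite_subset[of _ "Pow {..<n}"]) auto

lemma card_samples: "card (samples n s) = n choose s"
  unfolding samples_def using n_subsets[of "{..<n}" s] by simp

lemma samples_nonempty: "s \<le> n \<Longrightarrow> samples n s \<noteq> {}"
  using card_samples[of n s] zero_less_binomial[of s n] by auto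

lemma mgf_bound:
  assumes A: "A \<subseteq> {..<n}" "card A = m" and sn: "s \<le> n" and n: "0 < n" and w: "w \<ge> 0"
  shows "(\<Sum>I\<in>samples n s. (1 + w) ^ card (I \<inter> A)) \<le> real (n choose s) * (1 + (real m / real n) * w) ^ s"
proof -
  have mn: "m \<le> n" using A card_mono[OF _ A(1)] by auto
  have X: "card (I \<inter> A) \<le> s" if "I \<in> samples n s" for I
  proof -
    have "finite I" using that unfolding samples_def using finite_subset by blast
    then show ?thesis using that card_mono[of I "I \<inter> A"] unfolding samples_def by auto
  qed
  have "(\<Sum>I\<in>samples n s. (1 + w) ^ card (I \<inter> A)) = (\<Sum>I\<in>samples n s. \<Sum>j\<le>s. real (card (I \<inter> A) choose j) * w ^ j)"
  proof (rule sum.cong[OF refl])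
    fix I assume I: "I \<in> samples n s"
    have "(1 + w) ^ card (I \<inter> A) = (w + 1) ^ card (I \<inter> A)" by (simp add: add.commute)
    also have "\<dots> = (\<Sum>j\<le>card (I \<inter> A). real (card (I \<inter> A) choose j) * w ^ j)"
      by (subst binomial_ring) (simp add: mult.commute)
    also have "\<dots> = (\<Sum>j\<le>s. real (card (I \<inter> A) choose j) * w ^ j)"
      by (rule sum.mono_neutral_left) (use X[OF I] in \<open>auto simp: binomial_eq_0\<close>)
    finally show "(1 + w) ^ card (I \<inter> A) = (\<Sum>j\<le>s. real (card (I \<inter> A) choose j) * w ^ j)" .
  qed
  also have "\<dots> = (\<Sum>j\<le>s. w ^ j * real (\<Sum>I\<in>samples n s. card (I \<inter> A) choose j))"
    by (subst sum.swap) (simp add: sum_distrib_left mult.commute)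
  also have "\<dots> = (\<Sum>j\<le>s. w ^ j * (real (m choose j) * real ((n - j) choose (s - j))))"
    by (rule sum.cong[OF refl]) (simp add: sum_choose_inter[OF A])
  also have "\<dots> \<le> (\<Sum>j\<le>s. w ^ j * (real (n choose s) * real (s choose j) * (real m / real n) ^ j))"
  proof (rule sum_mono)
    fix j assume "j \<in> {..s}"
    then have js: "j \<le> s" by simp
    have cm: "real (n choose s) * real (s choose j) = real (n choose j) * real ((n - j) choose (s - j))"
      using choose_mult[OF js sn] by (metis of_nat_mult)
    have "real (m choose j) * real ((n - j) choose (s - j)) \<le>
          (real (n choose j) * (real m / real n) ^ j) * real ((n - j) choose (s - j))"
      by (intro mult_right_mono choose_ratio_le mn n) auto
    also have "\<dots> = real (n choose s) * real (s choose j) * (real m / real n) ^ j"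
      using cm by (simp add: algebra_simps)
    finally show "w ^ j * (real (m choose j) * real ((n - j) choose (s - j))) \<le>
          w ^ j * (real (n choose s) * real (s choose j) * (real m / real n) ^ j)"
      by (intro mult_left_mono) (use w in auto)
  qed
  also have "\<dots> = real (n choose s) * (\<Sum>j\<le>s. real (s choose j) * ((real m / real n) * w) ^ j)"
  proof -
    have "\<And>j. w ^ j * (real (n choose s) * real (s choose j) * (real m / real n) ^ j) =
       real (n choose s) * (real (s choose j) * ((real m / real n) * w) ^ j)"
      by (simp only: power_mult_distrib) (simp only: mult_ac)
    then have "(\<Sum>j\<le>s. w ^ j * (real (n choose s) * real (s choose j) * (real m / real n) ^ j)) =
       (\<Sum>j\<le>s. real (n choose s) * (real (s choose j) * ((real m / real n) * w) ^ j))"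
      by (rule sum.cong[OF refl])
    also have "\<dots> = real (n choose s) * (\<Sum>j\<le>s. real (s choose j) * ((real m / real n) * w) ^ j)"
      by (rule sum_distrib_left[symmetric])
    finally show ?thesis .
  qed
  also have "(\<Sum>j\<le>s. real (s choose j) * ((real m / real n) * w) ^ j) = ((real m / real n) * w + 1) ^ s"
    by (subst binomial_ring) (simp add: mult.commute)
  finally show ?thesis by (simp add: add.commute)
qed

lemma upper_tail_card:
  assumes A: "A \<subseteq> {..<n}" "card A = m" and sn: "s \<le> n" and s: "0 < s" and t: "0 < t"
  shows "real (card {I\<in>samples n s. real (card (I \<inter> A)) \<ge> real s * real m / real n + t})
         \<le> real (n choose s) * exp (- 2 * t\<^sup>2 / real s)"
proof -
  have n: "0 < n" using sn s by simp
  have mn: "m \<le> n" using A card_mono[OF _ A(1)] by auto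
  define p where "p = real m / real n"
  have p: "0 \<le> p" "p \<le> 1" using mn n unfolding p_def by auto
  define l where "l = 4 * t / real s"
  have l: "l > 0" using t s unfolding l_def by simp
  define w where "w = exp l - 1"
  have w: "w \<ge> 0" using l unfolding w_def by simp
  define X where "X = (\<lambda>I. card (I \<inter> A))"
  define B where "B = {I\<in>samples n s. real (X I) \<ge> real s * p + t}"
  have "real (card B) = (\<Sum>I\<in>B. 1)" by simp
  also have "\<dots> \<le> (\<Sum>I\<in>B. exp (l * (real (X I) - real s * p - t)))"
  proof (rule sum_mono)
    fix I assume "I \<in> B"
    then have "l * (real (X I) - real s * p - t) \<ge> 0" using l unfolding B_def by auto
    then show "1 \<le> exp (l * (real (X I) - real s * p - t))" by simp
  qed
  also have "\<dots> \<le> (\<Sum>I\<in>samples n s. exp (l * (real (X I) - real s * p - t)))"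
    by (rule sum_mono2[OF samples_finite]) (auto simp: B_def)
  also have "\<dots> = (\<Sum>I\<in>samples n s. exp (- l * (real s * p + t)) * (1 + w) ^ X I)"
  proof (rule sum.cong[OF refl])
    fix I
    have "(1 + w) ^ X I = exp (real (X I) * l)" unfolding w_def by (simp add: exp_of_nat_mult)
    then show "exp (l * (real (X I) - real s * p - t)) = exp (- l * (real s * p + t)) * (1 + w) ^ X I"
      by (simp add: exp_add[symmetric] algebra_simps)
  qed
  also have "\<dots> = exp (- l * (real s * p + t)) * (\<Sum>I\<in>samples n s. (1 + w) ^ X I)"
    by (simp add: sum_distrib_left)
  also have "\<dots> \<le> exp (- l * (real s * p + t)) * (real (n choose s) * (1 + p * w) ^ s)"
    unfolding X_def p_def by (intro mult_left_mono mgf_bound[OF A sn n w]) auto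
  also have "(1 + p * w) \<le> exp (l * p + l\<^sup>2 / 8)"
  proof -
    have pos: "0 < 1 + p * w" using p w by (simp add: add_pos_nonneg)
    have "- l * p + ln (1 + p * (exp l - 1)) \<le> l\<^sup>2 / 8"
      using Hoeffdings_lemma_aux[of l p] l p by simp
    then have "ln (1 + p * w) \<le> l * p + l\<^sup>2 / 8" unfolding w_def by simp
    then show ?thesis using pos by (metis exp_le_cancel_iff exp_ln)
  qed
  then have "exp (- l * (real s * p + t)) * (real (n choose s) * (1 + p * w) ^ s) \<le>
             exp (- l * (real s * p + t)) * (real (n choose s) * exp (l * p + l\<^sup>2 / 8) ^ s)"
    using p w by (intro mult_left_mono power_mono) auto
  also have "\<dots> = real (n choose s) * exp (- l * t + real s * l\<^sup>2 / 8)"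
    by (simp add: exp_of_nat_mult[symmetric] exp_add[symmetric] algebra_simps)
  also have "- l * t + real s * l\<^sup>2 / 8 = - 2 * t\<^sup>2 / real s"
    using s unfolding l_def by (simp add: field_simps power2_eq_square)
  finally show ?thesis unfolding B_def X_def p_def by (simp add: mult.assoc)
qed




lemma prob_upper:
  assumes A: "A \<subseteq> {..<n}" "card A = m" and sn: "s \<le> n" and s: "0 < s" and t: "0 < t"
  shows "measure_pmf.prob (pmf_of_set (samples n s)) {I. real (card (I \<inter> A)) \<ge> real s * real m / real n + t}
         \<le> exp (- 2 * t\<^sup>2 / real s)"
proof -
  have ne: "samples n s \<noteq> {}" using samples_nonempty[OF sn] .
  have cpos: "real (n choose s) > 0" using sn by simp
  have "measure_pmf.prob (pmf_of_set (samples n s)) {I. real (card (I \<inter> A)) \<ge> real s * real m / real n + t}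
      = real (card {I\<in>samples n s. real (card (I \<inter> A)) \<ge> real s * real m / real n + t}) / real (n choose s)"
    by (subst measure_pmf_of_set[OF ne samples_finite]) (simp add: card_samples Int_def)
  also have "\<dots> \<le> real (n choose s) * exp (- 2 * t\<^sup>2 / real s) / real (n choose s)"
    by (intro divide_right_mono upper_tail_card[OF A sn s t]) auto
  also have "\<dots> = exp (- 2 * t\<^sup>2 / real s)" using cpos by simp
  finally show ?thesis .
qed

lemma prob_lower:
  assumes A: "A \<subseteq> {..<n}" "card A = m" and sn: "s \<le> n" and s: "0 < s" and t: "0 < t"
  shows "measure_pmf.prob (pmf_of_set (samples n s)) {I. real (card (I \<inter> A)) \<le> real s * real m / real n - t}
         \<le> exp (- 2 * t\<^sup>2 / real s)"
proof -
  define A' where "A' = {..<n} - A"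
  have fA: "finite A" using A finite_subset by blast
  have A': "A' \<subseteq> {..<n}" "card A' = n - m" unfolding A'_def using A fA by (auto simp: card_Diff_subset)
  have mn: "m \<le> n" using A card_mono[OF _ A(1)] by auto
  have n: "0 < n" using sn s by simp
  have ne: "samples n s \<noteq> {}" using samples_nonempty[OF sn] .
  have eq: "samples n s \<inter> {I. real (card (I \<inter> A)) \<le> real s * real m / real n - t} =
            samples n s \<inter> {I. real (card (I \<inter> A')) \<ge> real s * real (n - m) / real n + t}"
  proof (rule set_eqI, rule iffI)
    fix I assume "I \<in> samples n s \<inter> {I. real (card (I \<inter> A)) \<le> real s * real m / real n - t}"
    then have I: "I \<subseteq> {..<n}" "card I = s" "real (card (I \<inter> A)) \<le> real s * real m / real n - t"
      unfolding samples_def by auto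
    have fI: "finite I" using I finite_subset by blast
    have "I \<inter> A' = I - (I \<inter> A)" unfolding A'_def using I by auto
    then have c: "card (I \<inter> A') = s - card (I \<inter> A)" using fI I by (simp add: card_Diff_subset)
    have le: "card (I \<inter> A) \<le> s" using I fI card_mono[of I "I \<inter> A"] by auto
    have "real s * real (n - m) / real n = real s - real s * real m / real n"
      using mn n by (simp add: of_nat_diff field_simps)
    then show "I \<in> samples n s \<inter> {I. real (card (I \<inter> A')) \<ge> real s * real (n - m) / real n + t}"
      using I c le \<open>I \<in> _\<close> by (auto simp: of_nat_diff)
  next
    fix I assume "I \<in> samples n s \<inter> {I. real (card (I \<inter> A')) \<ge> real s * real (n - m) / real n + t}"
    then have I: "I \<subseteq> {..<n}" "card I = s" "real (card (I \<inter> A')) \<ge> real s * real (n - m) / real n + t"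
      unfolding samples_def by auto
    have fI: "finite I" using I finite_subset by blast
    have "I \<inter> A' = I - (I \<inter> A)" unfolding A'_def using I by auto
    then have c: "card (I \<inter> A') = s - card (I \<inter> A)" using fI I by (simp add: card_Diff_subset)
    have le: "card (I \<inter> A) \<le> s" using I fI card_mono[of I "I \<inter> A"] by auto
    have "real s * real (n - m) / real n = real s - real s * real m / real n"
      using mn n by (simp add: of_nat_diff field_simps)
    then show "I \<in> samples n s \<inter> {I. real (card (I \<inter> A)) \<le> real s * real m / real n - t}"
      using I c le \<open>I \<in> _\<close> by (auto simp: of_nat_diff)
  qed
  have "measure_pmf.prob (pmf_of_set (samples n s)) {I. real (card (I \<inter> A)) \<le> real s * real m / real n - t}
      = measure_pmf.prob (pmf_of_set (samples n s)) {I. real (card (I \<inter> A')) \<ge> real s * real (n - m) / real n + t}"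
    by (simp add: measure_pmf_of_set[OF ne samples_finite] eq)
  also have "\<dots> \<le> exp (- 2 * t\<^sup>2 / real s)" by (rule prob_upper[OF A' sn s t])
  finally show ?thesis .
qed

definition kl :: "'a::linorder list \<Rightarrow> nat \<Rightarrow> nat \<Rightarrow> bool" where
  "kl xs i j \<longleftrightarrow> xs ! i < xs ! j \<or> (xs ! i = xs ! j \<and> i < j)"

definition rnk :: "'a::linorder list \<Rightarrow> nat \<Rightarrow> nat \<Rightarrow> nat" where
  "rnk xs n j = card {i. i < n \<and> kl xs i j}"

definition Pset :: "'a::linorder list \<Rightarrow> nat \<Rightarrow> nat \<Rightarrow> nat set" where
  "Pset xs n m = {j. j < n \<and> rnk xs n j < m}"

lemma kl_trans: "kl xs i j \<Longrightarrow> kl xs j l \<Longrightarrow> kl xs i l"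
  unfolding kl_def by auto

lemma kl_irrefl: "\<not> kl xs i i"
  unfolding kl_def by auto

lemma kl_total: "i \<noteq> j \<Longrightarrow> kl xs i j \<or> kl xs j i"
  unfolding kl_def by auto

lemma rnk_lt: "j < n \<Longrightarrow> rnk xs n j < n"
proof -
  assume j: "j < n"
  have "{i. i < n \<and> kl xs i j} \<subseteq> {..<n} - {j}" using kl_irrefl by auto
  then have "rnk xs n j \<le> card ({..<n} - {j})" unfolding rnk_def by (intro card_mono) auto
  then show ?thesis using j by simp
qed

lemma rnk_less: "kl xs i j \<Longrightarrow> i < n \<Longrightarrow> rnk xs n i < rnk xs n j"
proof -
  assume k: "kl xs i j" and i: "i < n"
  have "{l. l < n \<and> kl xs l i} \<subset> {l. l < n \<and> kl xs l j}"
    using k i kl_trans[of xs _ i j] kl_irrefl[of xs i] by blast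
  then show ?thesis unfolding rnk_def by (intro psubset_card_mono) auto
qed

lemma rnk_inj: "inj_on (rnk xs n) {..<n}"
proof (rule inj_onI)
  fix i j assume i: "i \<in> {..<n}" and j: "j \<in> {..<n}" and e: "rnk xs n i = rnk xs n j"
  show "i = j"
  proof (rule ccontr)
    assume "i \<noteq> j"
    then have "kl xs i j \<or> kl xs j i" by (rule kl_total)
    then show False using rnk_less[of xs i j n] rnk_less[of xs j i n] i j e by auto
  qed
qed

lemma rnk_image: "rnk xs n ` {..<n} = {..<n}"
proof -
  have sub: "rnk xs n ` {..<n} \<subseteq> {..<n}" using rnk_lt by auto
  have "card (rnk xs n ` {..<n}) = n" using card_image[OF rnk_inj] by simp
  then show ?thesis using sub by (intro card_subset_eq) auto
qed

lemma card_Pset: "m \<le> n \<Longrightarrow> card (Pset xs n m) = m"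
proof -
  assume mn: "m \<le> n"
  have sub: "Pset xs n m \<subseteq> {..<n}" unfolding Pset_def by auto
  have "inj_on (rnk xs n) (Pset xs n m)" by (rule inj_on_subset[OF rnk_inj sub])
  then have "card (Pset xs n m) = card (rnk xs n ` Pset xs n m)" by (simp add: card_image)
  also have "rnk xs n ` Pset xs n m = {..<m}"
  proof
    show "rnk xs n ` Pset xs n m \<subseteq> {..<m}" unfolding Pset_def by auto
    show "{..<m} \<subseteq> rnk xs n ` Pset xs n m"
    proof
      fix r assume "r \<in> {..<m}"
      then have "r \<in> rnk xs n ` {..<n}" using mn rnk_image[of xs n] by auto
      then obtain j where "j < n" "r = rnk xs n j" by auto
      then show "r \<in> rnk xs n ` Pset xs n m" using \<open>r \<in> {..<m}\<close> unfolding Pset_def by auto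
    qed
  qed
  finally show ?thesis by simp
qed

lemma Pset_down: "j \<in> Pset xs n m \<Longrightarrow> i < n \<Longrightarrow> kl xs i j \<Longrightarrow> i \<in> Pset xs n m"
  unfolding Pset_def using rnk_less[of xs i j n] by auto

lemma Pset_sub: "Pset xs n m \<subseteq> {..<n}"
  unfolding Pset_def by auto

lemma low_count:
  assumes I: "I \<subseteq> {..<n}" and mn: "m \<le> n" and c1: "i \<le> card (I \<inter> Pset xs n m)"
    and c2: "card {j\<in>I. xs ! j < y} < i"
  shows "card {j. j < n \<and> xs ! j < y} \<le> m - 1"
proof -
  have fI: "finite I" using I finite_subset by blast
  have "\<exists>j1\<in>I \<inter> Pset xs n m. \<not> xs ! j1 < y"
  proof (rule ccontr)
    assume "\<not> ?thesis"
    then have "I \<inter> Pset xs n m \<subseteq> {j\<in>I. xs ! j < y}" by auto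
    then have "card (I \<inter> Pset xs n m) \<le> card {j\<in>I. xs ! j < y}" using fI by (intro card_mono) auto
    then show False using c1 c2 by simp
  qed
  then obtain j1 where j1: "j1 \<in> I" "j1 \<in> Pset xs n m" "\<not> xs ! j1 < y" by auto
  have "{j. j < n \<and> xs ! j < y} \<subseteq> Pset xs n m - {j1}"
  proof
    fix j assume j: "j \<in> {j. j < n \<and> xs ! j < y}"
    then have "kl xs j j1" using j1 unfolding kl_def by auto
    then show "j \<in> Pset xs n m - {j1}" using Pset_down[OF j1(2)] j j1 by auto
  qed
  then have "card {j. j < n \<and> xs ! j < y} \<le> card (Pset xs n m - {j1})"
    by (intro card_mono) (auto intro: finite_subset[OF Pset_sub])
  also have "\<dots> = m - 1" using j1 card_Pset[OF mn, of xs] by (simp add: finite_subset[OF Pset_sub])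
  finally show ?thesis .
qed

lemma high_count:
  assumes I: "I \<subseteq> {..<n}" and mn: "m \<le> n" and c1: "card (I \<inter> Pset xs n m) < i"
    and c2: "i \<le> card {j\<in>I. xs ! j \<le> y}"
  shows "card {j. j < n \<and> xs ! j > y} \<le> n - m - 1"
proof -
  have fI: "finite I" using I finite_subset by blast
  have "\<exists>j2\<in>I - Pset xs n m. xs ! j2 \<le> y"
  proof (rule ccontr)
    assume "\<not> ?thesis"
    then have "{j\<in>I. xs ! j \<le> y} \<subseteq> I \<inter> Pset xs n m" by auto
    then have "card {j\<in>I. xs ! j \<le> y} \<le> card (I \<inter> Pset xs n m)" using fI by (intro card_mono) auto
    then show False using c1 c2 by simp
  qed
  then obtain j2 where j2: "j2 \<in> I" "j2 \<notin> Pset xs n m" "xs ! j2 \<le> y" by auto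
  have j2n: "j2 < n" using j2 I by auto
  have "{j. j < n \<and> xs ! j > y} \<subseteq> ({..<n} - Pset xs n m) - {j2}"
  proof
    fix j assume j: "j \<in> {j. j < n \<and> xs ! j > y}"
    then have "kl xs j2 j" using j2 unfolding kl_def by auto
    then have "j \<notin> Pset xs n m" using Pset_down[of j xs n m j2] j2n j2 by auto
    then show "j \<in> ({..<n} - Pset xs n m) - {j2}" using j j2 by auto
  qed
  then have "card {j. j < n \<and> xs ! j > y} \<le> card (({..<n} - Pset xs n m) - {j2})"
    by (intro card_mono) auto
  also have "\<dots> = n - m - 1" using j2 j2n card_Pset[OF mn, of xs] Pset_sub[of xs n m]
    by (simp add: card_Diff_subset finite_subset[OF Pset_sub])
  finally show ?thesis .
qed

lemma count_sorted_sample: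
  assumes "finite I"
  shows "card {j\<in>I. P (xs ! j)} = length (filter P (sorted_sample xs I))"
proof -
  have "length (filter P (sorted_sample xs I)) = size (mset (filter P (sorted_sample xs I)))"
    by (rule size_mset[symmetric])
  also have "\<dots> = size (mset (filter P (map (\<lambda>j. xs ! j) (sorted_list_of_set I))))"
    unfolding sorted_sample_def by simp
  also have "\<dots> = length (filter (\<lambda>j. P (xs ! j)) (sorted_list_of_set I))"
    apply (subst size_mset) apply (subst filter_map) by (simp add: o_def)
  also have "\<dots> = card (set (filter (\<lambda>j. P (xs ! j)) (sorted_list_of_set I)))"
    by (rule distinct_card[symmetric]) simp
  also have "set (filter (\<lambda>j. P (xs ! j)) (sorted_list_of_set I)) = {j\<in>I. P (xs ! j)}"
    using assms by auto
  finally show ?thesis by simp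
qed

lemma sorted_sample_props:
  assumes fI: "finite I" and i: "1 \<le> i" "i \<le> card I"
  shows "card {j\<in>I. xs ! j < sorted_sample xs I ! (i - 1)} < i"
    and "i \<le> card {j\<in>I. xs ! j \<le> sorted_sample xs I ! (i - 1)}"
proof -
  define ys where "ys = sorted_sample xs I"
  have len: "length ys = card I" unfolding ys_def sorted_sample_def by simp
  have sys: "sorted ys" unfolding ys_def sorted_sample_def by simp
  define t0 where "t0 = i - 1"
  have t0: "t0 < length ys" using i len unfolding t0_def by simp
  have "card {j\<in>I. xs ! j < ys ! t0} = length (filter (\<lambda>y. y < ys ! t0) ys)"
    unfolding ys_def by (rule count_sorted_sample[OF fI])
  also have "\<dots> = card {t. t < length ys \<and> ys ! t < ys ! t0}" by (rule length_filter_conv_card)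
  also have "\<dots> \<le> card {..<t0}"
  proof (rule card_mono)
    show "{t. t < length ys \<and> ys ! t < ys ! t0} \<subseteq> {..<t0}"
    proof
      fix t assume t: "t \<in> {t. t < length ys \<and> ys ! t < ys ! t0}"
      show "t \<in> {..<t0}"
      proof (rule ccontr)
        assume "t \<notin> {..<t0}"
        then have "ys ! t0 \<le> ys ! t" using sorted_nth_mono[OF sys, of t0 t] t by auto
        then show False using t by auto
      qed
    qed
  qed simp
  finally show "card {j\<in>I. xs ! j < sorted_sample xs I ! (i - 1)} < i"
    unfolding ys_def t0_def using i by simp
  have "i = card {..t0}" using i unfolding t0_def by simp
  also have "\<dots> \<le> card {t. t < length ys \<and> ys ! t \<le> ys ! t0}"
  proof (rule card_mono)
    show "{..t0} \<subseteq> {t. t < length ys \<and> ys ! t \<le> ys ! t0}"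
      using sorted_nth_mono[OF sys] t0 by auto
  qed simp
  also have "\<dots> = length (filter (\<lambda>y. y \<le> ys ! t0) ys)" by (rule length_filter_conv_card[symmetric])
  also have "\<dots> = card {j\<in>I. xs ! j \<le> ys ! t0}"
    unfolding ys_def by (rule count_sorted_sample[OF fI, symmetric])
  finally show "i \<le> card {j\<in>I. xs ! j \<le> sorted_sample xs I ! (i - 1)}"
    unfolding ys_def t0_def .
qed

lemma sorted_sample_mono:
  assumes "1 \<le> i" "i \<le> i'" "i' \<le> card I" "finite I"
  shows "sorted_sample xs I ! (i - 1) \<le> sorted_sample xs I ! (i' - 1)"
proof -
  have len: "length (sorted_sample xs I) = card I" unfolding sorted_sample_def by simp
  have sys: "sorted (sorted_sample xs I)" unfolding sorted_sample_def by simp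
  show ?thesis using sorted_nth_mono[OF sys, of "i - 1" "i' - 1"] assms len by simp
qed




definition hh :: "real \<Rightarrow> nat \<Rightarrow> nat \<Rightarrow> real" where
  "hh g s n = g * real n / real s"

definition mA :: "nat \<Rightarrow> nat \<Rightarrow> nat \<Rightarrow> real \<Rightarrow> nat" where
  "mA n k s g = min n (nat \<lceil>real k + 2 * hh g s n\<rceil>)"

definition mB :: "nat \<Rightarrow> nat \<Rightarrow> nat \<Rightarrow> real \<Rightarrow> nat" where
  "mB n k s g = nat \<lfloor>real k - 2 * hh g s n\<rfloor>"

definition FA where
  "FA xs n k s g I \<longleftrightarrow> real k * real s / real n > g \<and> card (I \<inter> Pset xs n k) < idx_u n k s g"
definition FB where
  "FB xs n k s g I \<longleftrightarrow> real k * real s / real n + g \<le> real s \<and> card (I \<inter> Pset xs n (k - 1)) \<ge> idx_v n k s g"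
definition FC where
  "FC xs n k s g I \<longleftrightarrow> card (I \<inter> Pset xs n (mA n k s g)) < idx_v n k s g"
definition FD where
  "FD xs n k s g I \<longleftrightarrow> card (I \<inter> Pset xs n (mB n k s g)) \<ge> idx_u n k s g"

definition ind :: "bool \<Rightarrow> real" where "ind b = (if b then 1 else 0)"

lemma idx_facts:
  assumes k: "1 \<le> k" "k \<le> n" and s: "1 \<le> s" and g: "0 < g"
  shows "1 \<le> idx_u n k s g" "idx_u n k s g \<le> idx_v n k s g" "idx_v n k s g \<le> s" "1 \<le> idx_v n k s g"
proof -
  have n: "real n > 0" using k by simp
  have q': "real k * real s \<le> real n * real s" using k by (intro mult_right_mono) auto
  have q: "real k * real s / real n \<le> real s" using q' n by (simp add: field_simps)
  have q0: "real k * real s / real n \<ge> 0" by simp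
  have c1: "\<lceil>real k * real s / real n - g\<rceil> \<le> int s"
    using q g by (simp add: ceiling_le_iff)
  have "0 < real k * real s / real n + g" using q0 g by linarith
  then have c2: "\<lceil>real k * real s / real n + g\<rceil> \<ge> 1"
    by (simp add: le_ceiling_iff)
  have c3: "\<lceil>real k * real s / real n - g\<rceil> \<le> \<lceil>real k * real s / real n + g\<rceil>"
    using g by (intro ceiling_mono) simp
  show "1 \<le> idx_u n k s g" unfolding idx_u_def by simp
  show "idx_v n k s g \<le> s" unfolding idx_v_def by simp
  have c2': "1 \<le> min \<lceil>real k * real s / real n + g\<rceil> (int s)"
    by (rule min.boundedI[OF c2]) (use s in simp)
  show "1 \<le> idx_v n k s g" unfolding idx_v_def using nat_mono[OF c2'] by simp
  have "max \<lceil>real k * real s / real n - g\<rceil> 1 \<le> min \<lceil>real k * real s / real n + g\<rceil> (int s)"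
  proof -
    have s': "1 \<le> int s" using s by simp
    show ?thesis using c1 c2 c3 s' by (simp only: max_def min_def) (smt (verit))
  qed
  then show "idx_u n k s g \<le> idx_v n k s g" unfolding idx_u_def idx_v_def by (rule nat_mono)
qed

lemma det_bound:
  fixes xs :: "'a::linorder list"
  assumes len: "length xs = n" and k: "1 \<le> k" "k \<le> n" and s: "1 \<le> s" "s \<le> n" and g: "0 < g"
    and gP: "0 \<le> \<gamma>P" and I: "I \<in> samples n s"
  shows "cost_bound \<gamma>P xs k s g I \<le> real n + real (min k (n - k)) + (2 * \<gamma>P - 1) * real s
           + (4 * \<gamma>P + 2) * hh g s n
           + real n * ind (if 2 * k < n then FC xs n k s g I else FD xs n k s g I)
           + \<gamma>P * real n * (ind (FA xs n k s g I) + ind (FB xs n k s g I) + ind (FC xs n k s g I) + ind (FD xs n k s g I))"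
proof -
  define h where "h = hh g s n"
  define iu where "iu = idx_u n k s g"
  define iv where "iv = idx_v n k s g"
  define u where "u = pivot_u xs k s g I"
  define v where "v = pivot_v xs k s g I"
  define m1 where "m1 = mA n k s g"
  define m2 where "m2 = mB n k s g"
  have nr: "real n > 0" using k by simp
  have sr: "real s > 0" using s by simp
  have hpos: "h > 0" unfolding h_def hh_def using g nr sr by simp
  have IS: "I \<subseteq> {..<n}" "card I = s" using I unfolding samples_def by auto
  have fI: "finite I" using IS finite_subset by blast
  have ix: "1 \<le> iu" "iu \<le> iv" "iv \<le> s" "1 \<le> iv"
    using idx_facts[OF k s(1) g] unfolding iu_def iv_def by auto
  have u_def': "u = sorted_sample xs I ! (iu - 1)" unfolding u_def pivot_u_def iu_def len ..
  have v_def': "v = sorted_sample xs I ! (iv - 1)" unfolding v_def pivot_v_def iv_def len ..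
  have U1: "card {j\<in>I. xs ! j < u} < iu" and U2: "iu \<le> card {j\<in>I. xs ! j \<le> u}"
    using sorted_sample_props[OF fI, of iu] ix IS unfolding u_def' by auto
  have V1: "card {j\<in>I. xs ! j < v} < iv" and V2: "iv \<le> card {j\<in>I. xs ! j \<le> v}"
    using sorted_sample_props[OF fI, of iv] ix IS unfolding v_def' by auto
  have uv: "u \<le> v" unfolding u_def' v_def' using sorted_sample_mono[OF ix(1) ix(2) _ fI] ix IS by simp
  have m1n: "m1 \<le> n" unfolding m1_def mA_def by simp
  have m1r: "real m1 < real k + 2 * h + 1"
  proof -
    have "real m1 \<le> real (nat \<lceil>real k + 2 * h\<rceil>)" unfolding m1_def mA_def h_def by simp
    also have "\<dots> = of_int \<lceil>real k + 2 * h\<rceil>" using hpos by simp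
    also have "\<dots> < real k + 2 * h + 1" by linarith
    finally show ?thesis .
  qed
  have m2k: "m2 \<le> k"
  proof -
    have "\<lfloor>real k - 2 * h\<rfloor> \<le> int k" using hpos by linarith
    then show ?thesis unfolding m2_def mB_def h_def[symmetric] by simp
  qed
  have m2r: "real m2 > real k - 2 * h - 1"
  proof -
    have "real m2 \<ge> of_int \<lfloor>real k - 2 * h\<rfloor>" unfolding m2_def mB_def h_def by linarith
    then show ?thesis by linarith
  qed
  define Cv where "Cv = card {j. j < n \<and> xs ! j < v}"
  define Gu where "Gu = card {j. j < n \<and> xs ! j > u}"
  have Cv: "\<not> FC xs n k s g I \<Longrightarrow> Cv \<le> m1 - 1"
    unfolding Cv_def FC_def
    by (rule low_count[OF IS(1) m1n _ V1]) (simp add: m1_def iv_def)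
  have Gu: "\<not> FD xs n k s g I \<Longrightarrow> Gu \<le> n - m2 - 1"
    unfolding Gu_def FD_def
    by (rule high_count[OF IS(1) _ _ U2]) (use m2k k in \<open>simp_all add: m2_def iu_def\<close>)
  have Cvr: "\<not> FC xs n k s g I \<Longrightarrow> real Cv < real k + 2 * h"
  proof -
    assume "\<not> FC xs n k s g I"
    then have "Cv \<le> m1 - 1" by (rule Cv)
    moreover have "m1 \<ge> 1"
    proof -
      have "card (I \<inter> Pset xs n m1) \<ge> iv" using \<open>\<not> FC xs n k s g I\<close> unfolding FC_def m1_def iv_def by simp
      then have "card (I \<inter> Pset xs n m1) \<ge> 1" using ix by simp
      then have "Pset xs n m1 \<noteq> {}" by auto
      then show ?thesis unfolding Pset_def by auto
    qed
    ultimately have "real Cv \<le> real m1 - 1" by simp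
    then show ?thesis using m1r by simp
  qed
  have Gur: "\<not> FD xs n k s g I \<Longrightarrow> real Gu < real n - real k + 2 * h"
  proof -
    assume "\<not> FD xs n k s g I"
    then have "Gu \<le> n - m2 - 1" by (rule Gu)
    then have "Gu = 0 \<or> real Gu \<le> real n - real m2 - 1" using m2k k by linarith
    then show ?thesis using m2r hpos k by auto
  qed
  define L where "L = card {j. j < n \<and> xs ! j < u}"
  define Uc where "Uc = card {j. j < n \<and> xs ! j = u}"
  define M where "M = card {j. j < n \<and> u < xs ! j \<and> xs ! j < v}"
  define R where "R = card {j. j < n \<and> xs ! j > v}"
  have Ln: "L \<le> n" unfolding L_def by (rule card_mono[of "{..<n}", simplified]) auto
  have Mn: "M \<le> n" unfolding M_def by (rule card_mono[of "{..<n}", simplified]) auto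
  have Rn: "R \<le> n" unfolding R_def by (rule card_mono[of "{..<n}", simplified]) auto
  have LC: "L \<le> Cv" unfolding L_def Cv_def using uv by (intro card_mono) auto
  have RG: "R \<le> Gu" unfolding R_def Gu_def using uv by (intro card_mono) auto
  have hat: "hat_n xs k u v = (if (L < k \<and> k \<le> L + Uc) \<or> (L + Uc + M < k \<and> k \<le> n - R) then 0
         else if k \<le> L then L else if n - R < k then R else M)"
    unfolding hat_n_def L_def Uc_def M_def R_def len Let_def ..
  have hat_n_le: "hat_n xs k u v \<le> n" unfolding hat using Ln Mn Rn by auto
  have FAn: "\<not> FA xs n k s g I \<Longrightarrow> k \<le> L \<Longrightarrow> real k \<le> h"
  proof -
    assume nA: "\<not> FA xs n k s g I" and kL: "k \<le> L"
    show "real k \<le> h"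
    proof (rule ccontr)
      assume "\<not> real k \<le> h"
      then have "real k * real s / real n > g" unfolding h_def hh_def using nr sr g by (simp add: field_simps)
      then have "card (I \<inter> Pset xs n k) \<ge> iu" using nA unfolding FA_def iu_def by simp
      then have "L \<le> k - 1" unfolding L_def by (rule low_count[OF IS(1) k(2) _ U1])
      then show False using kL k by simp
    qed
  qed
  have FBn: "\<not> FB xs n k s g I \<Longrightarrow> n - R < k \<Longrightarrow> real n - real k < h"
  proof -
    assume nB: "\<not> FB xs n k s g I" and kR: "n - R < k"
    show "real n - real k < h"
    proof (rule ccontr)
      assume "\<not> real n - real k < h"
      then have "real k * real s / real n + g \<le> real s" unfolding h_def hh_def using nr sr g k
        by (simp add: field_simps)
      then have "card (I \<inter> Pset xs n (k - 1)) < iv" using nB unfolding FB_def iv_def by simp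
      then have cc: "card (I \<inter> Pset xs n (k - 1)) < iv" .
      have k1: "k - 1 \<le> n" using k by simp
      have "R \<le> n - (k - 1) - 1" unfolding R_def by (rule high_count[OF IS(1) k1 cc V2])
      then show False using kR k Rn by simp
    qed
  qed
  have Mb: "\<not> FC xs n k s g I \<Longrightarrow> \<not> FD xs n k s g I \<Longrightarrow> real M < 4 * h"
  proof -
    assume nC: "\<not> FC xs n k s g I" and nD: "\<not> FD xs n k s g I"
    show ?thesis
    proof (cases "u = v")
      case True
      then have "M = 0" unfolding M_def by auto
      then show ?thesis using hpos by simp
    next
      case False
      then have uv': "u < v" using uv by simp
      have d: "{j. j < n \<and> u < xs ! j \<and> xs ! j < v} \<inter> {j. j < n \<and> \<not> xs ! j > u} = {}" by auto
      have sub: "{j. j < n \<and> u < xs ! j \<and> xs ! j < v} \<union> {j. j < n \<and> \<not> xs ! j > u} \<subseteq> {j. j < n \<and> xs ! j < v}"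
        using uv' by auto
      have "M + card {j. j < n \<and> \<not> xs ! j > u} \<le> Cv"
        unfolding M_def Cv_def using card_mono[OF _ sub] card_Un_disjoint[OF _ _ d] by simp
      moreover have "card {j. j < n \<and> \<not> xs ! j > u} + Gu = n"
      proof -
        have "card {j. j < n \<and> \<not> xs ! j > u} + Gu = card ({j. j < n \<and> \<not> xs ! j > u} \<union> {j. j < n \<and> xs ! j > u})"
          unfolding Gu_def by (rule card_Un_disjoint[symmetric]) auto
        also have "{j. j < n \<and> \<not> xs ! j > u} \<union> {j. j < n \<and> xs ! j > u} = {..<n}" by auto
        finally show ?thesis by simp
      qed
      ultimately have "real M + real n \<le> real Cv + real Gu" by linarith
      then show ?thesis using Cvr[OF nC] Gur[OF nD] by linarith
    qed
  qed
  have hatb: "real (hat_n xs k u v) \<le> 4 * h + real n * (ind (FA xs n k s g I) + ind (FB xs n k s g I) + ind (FC xs n k s g I) + ind (FD xs n k s g I))"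
  proof (cases "FA xs n k s g I \<or> FB xs n k s g I \<or> FC xs n k s g I \<or> FD xs n k s g I")
    case True
    then have "1 \<le> ind (FA xs n k s g I) + ind (FB xs n k s g I) + ind (FC xs n k s g I) + ind (FD xs n k s g I)"
      unfolding ind_def by auto
    then have "real n \<le> real n * (ind (FA xs n k s g I) + ind (FB xs n k s g I) + ind (FC xs n k s g I) + ind (FD xs n k s g I))"
      using mult_left_mono[of 1 _ "real n"] by simp
    then show ?thesis using hat_n_le hpos by linarith
  next
    case False
    then have nA: "\<not> FA xs n k s g I" and nB: "\<not> FB xs n k s g I" and nC: "\<not> FC xs n k s g I" and nD: "\<not> FD xs n k s g I" by auto
    have "real (hat_n xs k u v) < 4 * h"
    proof -
      have "hat_n xs k u v = 0 \<or> (hat_n xs k u v = L \<and> k \<le> L) \<or> (hat_n xs k u v = R \<and> n - R < k) \<or> hat_n xs k u v = M"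
        unfolding hat by auto
      then show ?thesis
      proof (elim disjE conjE)
        assume "hat_n xs k u v = 0" then show ?thesis using hpos by simp
      next
        assume "hat_n xs k u v = L" "k \<le> L"
        then show ?thesis using FAn[OF nA \<open>k \<le> L\<close>] LC Cvr[OF nC] by linarith
      next
        assume "hat_n xs k u v = R" "n - R < k"
        then show ?thesis using FBn[OF nB \<open>n - R < k\<close>] RG Gur[OF nD] by linarith
      next
        assume "hat_n xs k u v = M"
        then show ?thesis using Mb[OF nC nD] by simp
      qed
    qed
    then show ?thesis unfolding ind_def using False by simp
  qed
  define E where "E = (if u = v then 0 else if 2 * k < n then card {j. j < n \<and> j \<notin> I \<and> xs ! j < v}
       else card {j. j < n \<and> j \<notin> I \<and> xs ! j > u})"
  have pc: "part_cost xs k I u v = (n - s) + E" unfolding part_cost_def E_def len Let_def IS(2) ..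
  have En: "E \<le> n" unfolding E_def by (auto intro!: card_mono[of "{..<n}", simplified])
  have Eb: "real E \<le> real (min k (n - k)) + 2 * h + real n * ind (if 2 * k < n then FC xs n k s g I else FD xs n k s g I)"
  proof (cases "if 2 * k < n then FC xs n k s g I else FD xs n k s g I")
    case True
    then show ?thesis using En hpos unfolding ind_def by simp
  next
    case False
    show ?thesis
    proof (cases "2 * k < n")
      case True
      then have nC: "\<not> FC xs n k s g I" using False by simp
      have "E \<le> Cv" unfolding E_def Cv_def using True by (auto intro!: card_mono)
      then show ?thesis using Cvr[OF nC] True False unfolding ind_def by simp
    next
      case F2: False
      then have nD: "\<not> FD xs n k s g I" using False by simp
      have "E \<le> Gu" unfolding E_def Gu_def using F2 by (auto intro!: card_mono)
      then show ?thesis using Gur[OF nD] F2 False k unfolding ind_def by (simp add: of_nat_diff)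
    qed
  qed
  have "cost_bound \<gamma>P xs k s g I = 2 * \<gamma>P * real s + real ((n - s) + E) + \<gamma>P * real (hat_n xs k u v)"
    unfolding cost_bound_def Let_def u_def[symmetric] v_def[symmetric] pc ..
  also have "\<dots> = 2 * \<gamma>P * real s + real n - real s + real E + \<gamma>P * real (hat_n xs k u v)"
    using s by (simp add: of_nat_diff)
  also have "\<dots> \<le> 2 * \<gamma>P * real s + real n - real s
        + (real (min k (n - k)) + 2 * h + real n * ind (if 2 * k < n then FC xs n k s g I else FD xs n k s g I))
        + \<gamma>P * (4 * h + real n * (ind (FA xs n k s g I) + ind (FB xs n k s g I) + ind (FC xs n k s g I) + ind (FD xs n k s g I)))"
    by (intro add_mono mult_left_mono Eb hatb gP order_refl)
  also have "\<dots> = real n + real (min k (n - k)) + (2 * \<gamma>P - 1) * real s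
           + (4 * \<gamma>P + 2) * h
           + real n * ind (if 2 * k < n then FC xs n k s g I else FD xs n k s g I)
           + \<gamma>P * real n * (ind (FA xs n k s g I) + ind (FB xs n k s g I) + ind (FC xs n k s g I) + ind (FD xs n k s g I))"
    by (simp add: algebra_simps)
  finally show ?thesis unfolding h_def .
qed




lemma prob_mono_S:
  assumes "s \<le> n" and "\<And>I. I \<in> samples n s \<Longrightarrow> P I \<Longrightarrow> Q I"
  shows "measure_pmf.prob (pmf_of_set (samples n s)) {I. P I} \<le> measure_pmf.prob (pmf_of_set (samples n s)) {I. Q I}"
proof -
  have ne: "samples n s \<noteq> {}" using samples_nonempty[OF assms(1)] .
  have "card (samples n s \<inter> {I. P I}) \<le> card (samples n s \<inter> {I. Q I})"
    using assms(2) by (intro card_mono) (auto intro: finite_subset[OF _ samples_finite])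
  then show ?thesis
    by (simp add: measure_pmf_of_set[OF ne samples_finite] divide_right_mono)
qed

lemma Pset_full: "Pset xs n n = {..<n}"
  using card_Pset[of n n xs] Pset_sub[of xs n n] by (intro card_subset_eq) auto

lemma Pset_zero: "Pset xs n 0 = {}"
  unfolding Pset_def by auto

context
  fixes xs :: "'a::linorder list" and n k s :: nat and g :: real
  assumes len: "length xs = n" and k: "1 \<le> k" "k \<le> n" and s: "1 \<le> s" "s \<le> n" and g: "0 < g"
begin

abbreviation "DD \<equiv> pmf_of_set (samples n s)"

lemma nr: "real n > 0" using k by simp
lemma sr: "real s > 0" using s by simp

lemma prob_FA: "measure_pmf.prob DD {I. FA xs n k s g I} \<le> exp (- 2 * g\<^sup>2 / real s)"
proof -
  have "measure_pmf.prob DD {I. FA xs n k s g I} \<le>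
        measure_pmf.prob DD {I. real (card (I \<inter> Pset xs n k)) \<le> real s * real k / real n - g}"
  proof (rule prob_mono_S[OF s(2)])
    fix I assume "FA xs n k s g I"
    then have a: "real k * real s / real n > g" "card (I \<inter> Pset xs n k) < idx_u n k s g"
      unfolding FA_def by auto
    have "1 \<le> \<lceil>real k * real s / real n - g\<rceil>" using a(1) by (subst le_ceiling_iff) linarith
    then have "idx_u n k s g = nat \<lceil>real k * real s / real n - g\<rceil>" unfolding idx_u_def by simp
    then have "int (card (I \<inter> Pset xs n k)) < \<lceil>real k * real s / real n - g\<rceil>" using a(2) by linarith
    then have "real (card (I \<inter> Pset xs n k)) < real k * real s / real n - g"
      by (simp add: less_ceiling_iff)
    then show "real (card (I \<inter> Pset xs n k)) \<le> real s * real k / real n - g" by (simp add: mult.commute)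
  qed
  also have "\<dots> \<le> exp (- 2 * g\<^sup>2 / real s)"
    by (rule prob_lower[OF Pset_sub card_Pset[OF k(2)] s(2)]) (use s g in auto)
  finally show ?thesis .
qed

lemma prob_FB: "measure_pmf.prob DD {I. FB xs n k s g I} \<le> exp (- 2 * g\<^sup>2 / real s)"
proof -
  have k1: "k - 1 \<le> n" using k by simp
  have "measure_pmf.prob DD {I. FB xs n k s g I} \<le>
        measure_pmf.prob DD {I. real (card (I \<inter> Pset xs n (k - 1))) \<ge> real s * real (k - 1) / real n + g}"
  proof (rule prob_mono_S[OF s(2)])
    fix I assume "FB xs n k s g I"
    then have a: "real k * real s / real n + g \<le> real s" "card (I \<inter> Pset xs n (k - 1)) \<ge> idx_v n k s g"
      unfolding FB_def by auto
    have c: "\<lceil>real k * real s / real n + g\<rceil> \<le> int s" using a(1) by (simp add: ceiling_le_iff)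
    have "0 < real k * real s / real n + g" using g by (simp add: add_nonneg_pos)
    then have c1: "1 \<le> \<lceil>real k * real s / real n + g\<rceil>" by (subst le_ceiling_iff) linarith
    have "idx_v n k s g = nat \<lceil>real k * real s / real n + g\<rceil>" unfolding idx_v_def using c by simp
    then have "int (card (I \<inter> Pset xs n (k - 1))) \<ge> \<lceil>real k * real s / real n + g\<rceil>" using a(2) c1 by linarith
    then have "real (card (I \<inter> Pset xs n (k - 1))) \<ge> real k * real s / real n + g"
      by (simp add: ceiling_le_iff)
    moreover have "real s * real (k - 1) / real n \<le> real k * real s / real n"
      using nr k by (intro divide_right_mono) (auto simp: of_nat_diff algebra_simps)
    ultimately show "real (card (I \<inter> Pset xs n (k - 1))) \<ge> real s * real (k - 1) / real n + g" by linarith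
  qed
  also have "\<dots> \<le> exp (- 2 * g\<^sup>2 / real s)"
    by (rule prob_upper[OF Pset_sub card_Pset[OF k1] s(2)]) (use s g in auto)
  finally show ?thesis .
qed

lemma prob_FC: "measure_pmf.prob DD {I. FC xs n k s g I} \<le> exp (- 2 * g\<^sup>2 / real s)"
proof -
  define m1 where "m1 = mA n k s g"
  have m1n: "m1 \<le> n" unfolding m1_def mA_def by simp
  have "measure_pmf.prob DD {I. FC xs n k s g I} \<le>
        measure_pmf.prob DD {I. real (card (I \<inter> Pset xs n m1)) \<le> real s * real m1 / real n - g}"
  proof (rule prob_mono_S[OF s(2)])
    fix I assume I: "I \<in> samples n s" and F: "FC xs n k s g I"
    then have a: "card (I \<inter> Pset xs n m1) < idx_v n k s g" unfolding FC_def m1_def by auto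
    have IS: "I \<subseteq> {..<n}" "card I = s" using I unfolding samples_def by auto
    have "0 \<le> real k * real s / real n" by simp
    then have c0: "0 \<le> \<lceil>real k * real s / real n + g\<rceil>" using g by (subst zero_le_ceiling) linarith
    have iv: "int (idx_v n k s g) \<le> \<lceil>real k * real s / real n + g\<rceil>" unfolding idx_v_def using c0 by simp
    have lt: "real (card (I \<inter> Pset xs n m1)) < real k * real s / real n + g"
    proof -
      have "int (card (I \<inter> Pset xs n m1)) < \<lceil>real k * real s / real n + g\<rceil>" using a iv by linarith
      then show ?thesis by (simp add: less_ceiling_iff)
    qed
    have m1ne: "m1 \<noteq> n"
    proof
      assume "m1 = n"
      then have "card (I \<inter> Pset xs n m1) = s" using IS Pset_full[of xs n] by (simp add: Int_absorb2)
      then show False using a idx_facts(3)[OF k s(1) g] by simp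
    qed
    then have "m1 = nat \<lceil>real k + 2 * hh g s n\<rceil>" unfolding m1_def mA_def by simp
    then have "real m1 \<ge> real k + 2 * hh g s n" by linarith
    then have "real s * real m1 / real n \<ge> real s * (real k + 2 * hh g s n) / real n"
      using nr sr by (intro divide_right_mono mult_left_mono) auto
    also have "real s * (real k + 2 * hh g s n) / real n = real k * real s / real n + 2 * g"
      unfolding hh_def using nr sr by (simp add: field_simps)
    finally show "real (card (I \<inter> Pset xs n m1)) \<le> real s * real m1 / real n - g" using lt by linarith
  qed
  also have "\<dots> \<le> exp (- 2 * g\<^sup>2 / real s)"
    by (rule prob_lower[OF Pset_sub card_Pset[OF m1n] s(2)]) (use s g in auto)
  finally show ?thesis .
qed

lemma prob_FD: "measure_pmf.prob DD {I. FD xs n k s g I} \<le> exp (- 2 * g\<^sup>2 / real s)"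
proof -
  define m2 where "m2 = mB n k s g"
  have m2k: "m2 \<le> k"
  proof -
    have "hh g s n > 0" unfolding hh_def using g nr sr by simp
    then have "\<lfloor>real k - 2 * hh g s n\<rfloor> \<le> int k" by linarith
    then show ?thesis unfolding m2_def mB_def by simp
  qed
  have m2n: "m2 \<le> n" using m2k k by simp
  have "measure_pmf.prob DD {I. FD xs n k s g I} \<le>
        measure_pmf.prob DD {I. real (card (I \<inter> Pset xs n m2)) \<ge> real s * real m2 / real n + g}"
  proof (rule prob_mono_S[OF s(2)])
    fix I assume I: "I \<in> samples n s" and F: "FD xs n k s g I"
    then have a: "card (I \<inter> Pset xs n m2) \<ge> idx_u n k s g" unfolding FD_def m2_def by auto
    have iu: "int (idx_u n k s g) \<ge> \<lceil>real k * real s / real n - g\<rceil>" unfolding idx_u_def by (simp add: max_def)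
    have ge: "real (card (I \<inter> Pset xs n m2)) \<ge> real k * real s / real n - g"
    proof -
      have "int (card (I \<inter> Pset xs n m2)) \<ge> \<lceil>real k * real s / real n - g\<rceil>" using a iu by linarith
      then show ?thesis by (simp add: ceiling_le_iff)
    qed
    have m2ne: "m2 \<noteq> 0"
    proof
      assume "m2 = 0"
      then show False using a idx_facts(1)[OF k s(1) g] Pset_zero[of xs n] by simp
    qed
    then have "m2 = nat \<lfloor>real k - 2 * hh g s n\<rfloor>" "\<lfloor>real k - 2 * hh g s n\<rfloor> \<ge> 1"
      unfolding m2_def mB_def by auto
    then have "real m2 \<le> real k - 2 * hh g s n" by linarith
    then have "real s * real m2 / real n \<le> real s * (real k - 2 * hh g s n) / real n"
      using nr sr by (intro divide_right_mono mult_left_mono) auto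
    also have "real s * (real k - 2 * hh g s n) / real n = real k * real s / real n - 2 * g"
      unfolding hh_def using nr sr by (simp add: field_simps)
    finally show "real (card (I \<inter> Pset xs n m2)) \<ge> real s * real m2 / real n + g" using ge by linarith
  qed
  also have "\<dots> \<le> exp (- 2 * g\<^sup>2 / real s)"
    by (rule prob_upper[OF Pset_sub card_Pset[OF m2n] s(2)]) (use s g in auto)
  finally show ?thesis .
qed

end




lemma prob_as_sum:
  assumes "s \<le> n"
  shows "measure_pmf.prob (pmf_of_set (samples n s)) {I. P I} = (\<Sum>I\<in>samples n s. ind (P I)) / real (card (samples n s))"
proof -
  have ne: "samples n s \<noteq> {}" using samples_nonempty[OF assms] .
  have "(\<Sum>I\<in>samples n s. ind (P I)) = real (card (samples n s \<inter> {I. P I}))"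
    unfolding ind_def using samples_finite by (simp add: sum.If_cases Int_def)
  then show ?thesis by (simp add: measure_pmf_of_set[OF ne samples_finite])
qed

lemma sum_ind_le:
  assumes "s \<le> n" "measure_pmf.prob (pmf_of_set (samples n s)) {I. P I} \<le> e"
  shows "(\<Sum>I\<in>samples n s. ind (P I)) \<le> real (card (samples n s)) * e"
proof -
  have N: "real (card (samples n s)) > 0" using samples_nonempty[OF assms(1)] samples_finite card_gt_0_iff by auto
  have "(\<Sum>I\<in>samples n s. ind (P I)) / real (card (samples n s)) \<le> e" using assms prob_as_sum by metis
  then show ?thesis using N by (simp add: divide_le_eq mult.commute)
qed

theorem theorem5p1:
  fixes \<alpha> \<beta> \<gamma>P \<epsilon> \<epsilon>s :: real
    and xs :: "'a::linorder list" and n k :: nat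
    and cnk :: "nat set \<Rightarrow> nat"
  assumes "\<alpha> > 0" and "\<beta> > 0" and "\<gamma>P > 2" and "0 < \<epsilon>" and "\<epsilon> < \<epsilon>s"
    and "max (1 + (\<epsilon> - \<epsilon>s) / 2) \<epsilon>s < 1"
    and "length xs = n" and "1 \<le> k" and "k \<le> n"
    and "sample_size \<alpha> \<epsilon>s n < n - 1"
    and "\<forall>I \<in> samples n (sample_size \<alpha> \<epsilon>s n).
           real (cnk I) \<le> cost_bound \<gamma>P xs k (sample_size \<alpha> \<epsilon>s n)
                             (gap \<beta> \<epsilon> (sample_size \<alpha> \<epsilon>s n) n) I"
  shows "let \<eta> = max (1 + (\<epsilon> - \<epsilon>s) / 2) \<epsilon>s;
             f = real n powr \<eta>;
             \<gamma>hat = (4 * \<gamma>P + 2) * sqrt (\<beta> / \<alpha>) + (2 * \<gamma>P - 1) * (\<alpha> + 1 / f);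
             D = pmf_of_set (samples n (sample_size \<alpha> \<epsilon>s n))
         in measure_pmf.prob D {I. real (cnk I) \<le> real n + real (min k (n - k)) + \<gamma>hat * f}
              \<ge> 1 - 4 * exp (- 2 * \<beta> * real n powr \<epsilon>)
          \<and> (real n powr (1 - \<eta>) * exp (- 2 * \<beta> * real n powr \<epsilon>) \<le> 1 \<longrightarrow>
               measure_pmf.expectation D (\<lambda>I. real (cnk I))
                 \<le> real n + real (min k (n - k)) + (\<gamma>hat + 4 * \<gamma>P + 2) * f)"
proof -
  note a = assms
  define s where "s = sample_size \<alpha> \<epsilon>s n"
  define g where "g = gap \<beta> \<epsilon> s n"
  define \<eta> where "\<eta> = max (1 + (\<epsilon> - \<epsilon>s) / 2) \<epsilon>s"
  define f where "f = real n powr \<eta>"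
  define gh where "gh = (4 * \<gamma>P + 2) * sqrt (\<beta> / \<alpha>) + (2 * \<gamma>P - 1) * (\<alpha> + 1 / f)"
  define D where "D = pmf_of_set (samples n s)"
  define e where "e = exp (- 2 * \<beta> * real n powr \<epsilon>)"
  define S where "S = samples n s"
  define N where "N = real (card S)"
  define h where "h = hh g s n"
  define mk where "mk = real (min k (n - k))"
  have slt: "s < n - 1" using a(10) unfolding s_def .
  have n2: "n \<ge> 2" using slt by simp
  have nr: "real n \<ge> 1" using n2 by simp
  have npos: "real n > 0" using n2 by simp
  have sdef: "s = nat \<lceil>\<alpha> * real n powr \<epsilon>s\<rceil>" using slt unfolding s_def sample_size_def by (simp add: min_def split: if_splits)
  have apos: "\<alpha> * real n powr \<epsilon>s > 0" using a(1) npos by simp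
  have s_ge: "real s \<ge> \<alpha> * real n powr \<epsilon>s" unfolding sdef by linarith
  have s_lt: "real s < \<alpha> * real n powr \<epsilon>s + 1" unfolding sdef using apos by linarith
  have s1: "1 \<le> s" using s_ge apos by linarith
  have sn: "s \<le> n" using slt by simp
  have sr: "real s > 0" using s1 by simp
  have bpos: "\<beta> * real s * real n powr \<epsilon> > 0" using a(2) sr npos by simp
  have gpos: "g > 0" unfolding g_def gap_def using bpos by simp
  have g2: "g\<^sup>2 = \<beta> * real s * real n powr \<epsilon>" unfolding g_def gap_def using bpos by simp
  have eq_e: "exp (- 2 * g\<^sup>2 / real s) = e" unfolding e_def g2 using sr by (simp add: field_simps)
  have fpos: "f > 0" unfolding f_def using npos by simp
  have eta1: "\<eta> \<ge> \<epsilon>s" "\<eta> \<ge> 1 + (\<epsilon> - \<epsilon>s) / 2" unfolding \<eta>_def by auto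
  have k1: "1 \<le> k" "k \<le> n" using a(8,9) a(7) by auto
  have len: "length xs = n" using a(7) .
  have sb: "(2 * \<gamma>P - 1) * real s \<le> (2 * \<gamma>P - 1) * (\<alpha> + 1 / f) * f"
  proof -
    have "real n powr \<epsilon>s \<le> f" unfolding f_def by (rule powr_mono[OF eta1(1) nr])
    then have "\<alpha> * real n powr \<epsilon>s \<le> \<alpha> * f" using a(1) by simp
    then have "real s \<le> \<alpha> * f + 1" using s_lt by linarith
    moreover have "(\<alpha> + 1 / f) * f = \<alpha> * f + 1" using fpos by (simp add: field_simps)
    ultimately have "real s \<le> (\<alpha> + 1 / f) * f" by simp
    then show ?thesis using a(3) by (simp add: mult.assoc)
  qed
  have hb: "h \<le> sqrt (\<beta> / \<alpha>) * f"
  proof -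
    have hnn: "h \<ge> 0" unfolding h_def hh_def using gpos npos sr by simp
    have "h\<^sup>2 = g\<^sup>2 * (real n)\<^sup>2 / (real s)\<^sup>2" unfolding h_def hh_def by (simp add: power_divide power_mult_distrib)
    also have "\<dots> = \<beta> * real n powr \<epsilon> * (real n)\<^sup>2 / real s" unfolding g2 using sr by (simp add: power2_eq_square field_simps)
    also have "\<dots> \<le> \<beta> * real n powr \<epsilon> * (real n)\<^sup>2 / (\<alpha> * real n powr \<epsilon>s)"
      using s_ge apos a(2) npos by (intro divide_left_mono) (auto intro!: mult_pos_pos)
    also have "\<dots> = (\<beta> / \<alpha>) * real n powr (\<epsilon> + 2 - \<epsilon>s)"
    proof -
      have "real n powr (real 2) = (real n) ^ 2" by (rule powr_realpow[OF npos])
      then have "(real n)\<^sup>2 = real n powr 2" by simp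
      then have "real n powr \<epsilon> * (real n)\<^sup>2 / real n powr \<epsilon>s = real n powr (\<epsilon> + 2 - \<epsilon>s)"
        using npos by (simp add: powr_add powr_diff)
      then show ?thesis using a(1) npos by (simp add: field_simps)
    qed
    also have "\<dots> \<le> (\<beta> / \<alpha>) * real n powr (2 * \<eta>)"
    proof -
      have "\<epsilon> + 2 - \<epsilon>s \<le> 2 * \<eta>" using eta1(2) by (simp add: field_simps)
      then show ?thesis using a(1,2) nr by (intro mult_left_mono powr_mono) auto
    qed
    also have "\<dots> = (sqrt (\<beta> / \<alpha>) * f)\<^sup>2"
    proof -
      have q: "(sqrt (\<beta> / \<alpha>))\<^sup>2 = \<beta> / \<alpha>" using a(1,2) by simp
      have "f * f = real n powr (\<eta> + \<eta>)" unfolding f_def by (rule powr_add[symmetric])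
      then have fsq: "f\<^sup>2 = real n powr (2 * \<eta>)" by (metis mult_2 power2_eq_square)
      show ?thesis unfolding power_mult_distrib q fsq ..
    qed
    finally have "h\<^sup>2 \<le> (sqrt (\<beta> / \<alpha>) * f)\<^sup>2" .
    moreover have "0 \<le> sqrt (\<beta> / \<alpha>) * f" using fpos a(1,2) by simp
    ultimately show ?thesis by (rule power2_le_imp_le)
  qed
  have base_thr: "real n + mk + (2 * \<gamma>P - 1) * real s + (4 * \<gamma>P + 2) * h \<le> real n + mk + gh * f"
  proof -
    have "(4 * \<gamma>P + 2) * h \<le> (4 * \<gamma>P + 2) * (sqrt (\<beta> / \<alpha>) * f)" using hb a(3) by (intro mult_left_mono) auto
    then show ?thesis using sb unfolding gh_def by (simp add: algebra_simps)
  qed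
  define iA where "iA = (\<lambda>I. ind (FA xs n k s g I))"
  define iB where "iB = (\<lambda>I. ind (FB xs n k s g I))"
  define iC where "iC = (\<lambda>I. ind (FC xs n k s g I))"
  define iD where "iD = (\<lambda>I. ind (FD xs n k s g I))"
  define iE where "iE = (\<lambda>I. ind (if 2 * k < n then FC xs n k s g I else FD xs n k s g I))"
  have per: "real (cnk I) \<le> real n + mk + (2 * \<gamma>P - 1) * real s + (4 * \<gamma>P + 2) * h
        + real n * iE I + \<gamma>P * real n * (iA I + iB I + iC I + iD I)" if I: "I \<in> S" for I
  proof -
    have "real (cnk I) \<le> cost_bound \<gamma>P xs k s g I" using a(11) I unfolding S_def s_def g_def by blast
    also have "\<dots> \<le> real n + real (min k (n - k)) + (2 * \<gamma>P - 1) * real s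
           + (4 * \<gamma>P + 2) * hh g s n
           + real n * ind (if 2 * k < n then FC xs n k s g I else FD xs n k s g I)
           + \<gamma>P * real n * (ind (FA xs n k s g I) + ind (FB xs n k s g I) + ind (FC xs n k s g I) + ind (FD xs n k s g I))"
      by (rule det_bound[OF len k1 s1 sn gpos _ I[unfolded S_def]]) (use a(3) in simp)
    finally show ?thesis unfolding iA_def iB_def iC_def iD_def iE_def h_def mk_def .
  qed
  have ne: "S \<noteq> {}" unfolding S_def using samples_nonempty[OF sn] .
  have finS: "finite S" unfolding S_def by (rule samples_finite)
  have "card S > 0" using ne finS by (simp add: card_gt_0_iff)
  then have Npos: "N > 0" unfolding N_def by simp
  have PA: "(\<Sum>I\<in>S. iA I) \<le> N * e" unfolding iA_def S_def N_def
    by (rule sum_ind_le[OF sn prob_FA[OF len k1 s1 sn gpos, unfolded eq_e]])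
  have PB: "(\<Sum>I\<in>S. iB I) \<le> N * e" unfolding iB_def S_def N_def
    by (rule sum_ind_le[OF sn prob_FB[OF len k1 s1 sn gpos, unfolded eq_e]])
  have PC: "(\<Sum>I\<in>S. iC I) \<le> N * e" unfolding iC_def S_def N_def
    by (rule sum_ind_le[OF sn prob_FC[OF len k1 s1 sn gpos, unfolded eq_e]])
  have PD: "(\<Sum>I\<in>S. iD I) \<le> N * e" unfolding iD_def S_def N_def
    by (rule sum_ind_le[OF sn prob_FD[OF len k1 s1 sn gpos, unfolded eq_e]])
  have PE: "(\<Sum>I\<in>S. iE I) \<le> N * e"
  proof (cases "2 * k < n")
    case True
    then have "iE = iC" unfolding iE_def iC_def by simp
    then show ?thesis using PC by simp
  next
    case False
    then have "iE = iD" unfolding iE_def iD_def by simp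
    then show ?thesis using PD by simp
  qed
  define thr where "thr = real n + mk + gh * f"
  have part1: "measure_pmf.prob D {I. real (cnk I) \<le> thr} \<ge> 1 - 4 * e"
  proof -
    have "\<forall>I\<in>S. 1 - (iA I + iB I + iC I + iD I) \<le> ind (real (cnk I) \<le> thr)"
    proof
      fix I assume I: "I \<in> S"
      show "1 - (iA I + iB I + iC I + iD I) \<le> ind (real (cnk I) \<le> thr)"
      proof (cases "iA I + iB I + iC I + iD I = 0")
        case True
        then have z: "iA I = 0" "iB I = 0" "iC I = 0" "iD I = 0"
          unfolding iA_def iB_def iC_def iD_def ind_def by (auto split: if_splits)
        then have "iE I = 0" unfolding iE_def iC_def iD_def ind_def by (auto split: if_splits)
        then have "real (cnk I) \<le> thr" using per[OF I] z base_thr unfolding thr_def by simp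
        then show ?thesis using True unfolding ind_def by simp
      next
        case False
        then have "iA I + iB I + iC I + iD I \<ge> 1"
          unfolding iA_def iB_def iC_def iD_def ind_def by (auto split: if_splits)
        then show ?thesis unfolding ind_def by auto
      qed
    qed
    then have "(\<Sum>I\<in>S. 1 - (iA I + iB I + iC I + iD I)) \<le> (\<Sum>I\<in>S. ind (real (cnk I) \<le> thr))"
      by (intro sum_mono) auto
    moreover have "(\<Sum>I\<in>S. 1 - (iA I + iB I + iC I + iD I)) = N - ((\<Sum>I\<in>S. iA I) + (\<Sum>I\<in>S. iB I) + (\<Sum>I\<in>S. iC I) + (\<Sum>I\<in>S. iD I))"
      unfolding N_def by (simp add: sum_subtractf sum.distrib)
    ultimately have "N * (1 - 4 * e) \<le> (\<Sum>I\<in>S. ind (real (cnk I) \<le> thr))"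
      using PA PB PC PD by (simp add: algebra_simps)
    then have "1 - 4 * e \<le> (\<Sum>I\<in>S. ind (real (cnk I) \<le> thr)) / N" using Npos by (simp add: field_simps)
    also have "\<dots> = measure_pmf.prob D {I. real (cnk I) \<le> thr}"
      unfolding D_def N_def S_def by (rule prob_as_sum[OF sn, symmetric])
    finally show ?thesis .
  qed
  have part2: "real n powr (1 - \<eta>) * e \<le> 1 \<Longrightarrow> measure_pmf.expectation D (\<lambda>I. real (cnk I)) \<le> thr + (4 * \<gamma>P + 2) * f"
  proof -
    assume cond: "real n powr (1 - \<eta>) * e \<le> 1"
    have ne_f: "real n * e \<le> f"
    proof -
      have "real n = f * real n powr (1 - \<eta>)" unfolding f_def using npos by (simp add: powr_add[symmetric])
      then have "real n * e = f * (real n powr (1 - \<eta>) * e)" by simp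
      also have "\<dots> \<le> f * 1" using cond fpos by (intro mult_left_mono) auto
      finally show ?thesis by simp
    qed
    define base where "base = real n + mk + (2 * \<gamma>P - 1) * real s + (4 * \<gamma>P + 2) * h"
    have "(\<Sum>I\<in>S. real (cnk I)) \<le> (\<Sum>I\<in>S. base + real n * iE I + \<gamma>P * real n * (iA I + iB I + iC I + iD I))"
      using per unfolding base_def by (intro sum_mono) auto
    also have "\<dots> = N * base + real n * (\<Sum>I\<in>S. iE I) + \<gamma>P * real n * ((\<Sum>I\<in>S. iA I) + (\<Sum>I\<in>S. iB I) + (\<Sum>I\<in>S. iC I) + (\<Sum>I\<in>S. iD I))"
    proof -
      have 1: "(\<Sum>I\<in>S. base + real n * iE I + \<gamma>P * real n * (iA I + iB I + iC I + iD I)) =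
        (\<Sum>I\<in>S. base) + (\<Sum>I\<in>S. real n * iE I) + (\<Sum>I\<in>S. \<gamma>P * real n * (iA I + iB I + iC I + iD I))"
        by (simp only: sum.distrib)
      have 2: "(\<Sum>I\<in>S. \<gamma>P * real n * (iA I + iB I + iC I + iD I)) = \<gamma>P * real n * (\<Sum>I\<in>S. iA I + iB I + iC I + iD I)"
        by (rule sum_distrib_left[symmetric])
      have 3: "(\<Sum>I\<in>S. iA I + iB I + iC I + iD I) = (\<Sum>I\<in>S. iA I) + (\<Sum>I\<in>S. iB I) + (\<Sum>I\<in>S. iC I) + (\<Sum>I\<in>S. iD I)"
        by (simp only: sum.distrib)
      have 4: "(\<Sum>I\<in>S. real n * iE I) = real n * (\<Sum>I\<in>S. iE I)" by (rule sum_distrib_left[symmetric])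
      show ?thesis unfolding 1 2 3 4 N_def by simp
    qed
    also have "\<dots> \<le> N * base + real n * (N * e) + \<gamma>P * real n * (N * e + N * e + N * e + N * e)"
      using PA PB PC PD PE a(3) npos by (intro add_mono mult_left_mono order_refl) auto
    also have "\<dots> = N * (base + (1 + 4 * \<gamma>P) * (real n * e))" by (simp add: algebra_simps)
    finally have sum_le: "(\<Sum>I\<in>S. real (cnk I)) \<le> N * (base + (1 + 4 * \<gamma>P) * (real n * e))" .
    have "measure_pmf.expectation D (\<lambda>I. real (cnk I)) = (\<Sum>I\<in>S. real (cnk I)) / N"
      unfolding D_def S_def N_def by (rule integral_pmf_of_set[OF ne[unfolded S_def] samples_finite])
    also have "\<dots> \<le> base + (1 + 4 * \<gamma>P) * (real n * e)" using sum_le Npos by (simp add: field_simps)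
    also have "\<dots> \<le> base + (1 + 4 * \<gamma>P) * f" using ne_f a(3) by (intro add_mono mult_left_mono) auto
    also have "\<dots> \<le> thr + (4 * \<gamma>P + 2) * f"
    proof -
      have "(1 + 4 * \<gamma>P) * f \<le> (4 * \<gamma>P + 2) * f" using fpos by (intro mult_right_mono) auto
      then show ?thesis using base_thr unfolding base_def thr_def by linarith
    qed
    finally show ?thesis .
  qed
  have main: "measure_pmf.prob D {I. real (cnk I) \<le> thr} \<ge> 1 - 4 * e \<and>
     (real n powr (1 - \<eta>) * e \<le> 1 \<longrightarrow> measure_pmf.expectation D (\<lambda>I. real (cnk I)) \<le> real n + mk + (gh + 4 * \<gamma>P + 2) * f)"
    using part1 part2 unfolding thr_def by (simp add: algebra_simps)
  show ?thesis using main unfolding Let_def D_def e_def thr_def mk_def gh_def f_def \<eta>_def s_def .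
qed


end
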